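(* Let $\theta\in[0,1]$ and $\psi=\frac12-\frac{\theta}{4}$. On the cycle graph $C_5$, for $i\in\{1,2\}$ let $P^i_n$ be the probability that the tipsy cop and drunken robber game, started with cop and robber at distance $i$ and the robber moving first, lasts at least $n$ rounds, and let $P_i(t)=\sum_{n=0}^\infty P^i_n t^n$. Then \[ P_1(t)=\frac{1-\frac{\theta t}{4}}{\left(1-\frac{\theta t}{4}\right)(2-\psi t)-1},\qquad P_2(t)=\frac{1}{\left(1-\frac{\theta t}{4}\right)(2-\psi t)-1}. \]
   Context: Tipsy cop and drunken robber game on a graph: a cop and a robber occupy distinct vertices and alternate moves, the robber moving first; on each move the mover must move to an adjacent vertex (no staying put). The robber always moves to a uniformly random neighbor. The cop, independently at each of her moves, with probability $\theta$ moves to a uniformly random neighbor and with probability $1-\theta$ moves to a neighbor that decreases her distance to the robber (onto the robber if adjacent). All random choices are independent; the robber is captured (game over) as soon as both occupy the same vertex. A round consists of one robber move followed by one cop move; "lasts at least $n$ rounds" means no capture during the first $2n$ moves, and $P^i_0=1$. *)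

theory Defs
  imports Complex_Main
begin

definition c5_nbrs :: "nat \<Rightarrow> nat list" where
  "c5_nbrs v = [(v + 1) mod 5, (v + 4) mod 5]"

definition c5_dist :: "nat \<Rightarrow> nat \<Rightarrow> nat" where
  "c5_dist u v = min ((u + 5 - v) mod 5) ((v + 5 - u) mod 5)"

definition avg_list :: "('a \<Rightarrow> real) \<Rightarrow> 'a list \<Rightarrow> real" where
  "avg_list f xs = (\<Sum>x\<leftarrow>xs. f x) / real (length xs)"

text \<open>Probability that the game with cop at c and robber at r (robber to move) lasts at
  least n rounds.\<close>
fun tipsy_surv :: "real \<Rightarrow> nat \<Rightarrow> nat \<Rightarrow> nat \<Rightarrow> real" where
  "tipsy_surv \<theta> 0 c r = 1"
| "tipsy_surv \<theta> (Suc n) c r =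
     avg_list (\<lambda>r'. if r' = c then 0 else
        (let cont = (\<lambda>c'. if c' = r' then 0 else tipsy_surv \<theta> n c' r') in
          \<theta> * avg_list cont (c5_nbrs c)
          + (1 - \<theta>) * avg_list cont
               (filter (\<lambda>c'. c5_dist c' r' < c5_dist c r') (c5_nbrs c))))
     (c5_nbrs r)"

end

theory Submission
  imports Defs
begin
fun gg :: "real \<Rightarrow> nat \<Rightarrow> nat \<Rightarrow> real" where
  "gg \<theta> 0 d = 1"
| "gg \<theta> (Suc n) d = (if d = 1 then (1/2)*((1-\<theta>/2)*gg \<theta> n 1 + \<theta>/2*gg \<theta> n 2)
      else (1/2)*(\<theta>*gg \<theta> n 2 + (1-\<theta>/2)*gg \<theta> n 1))"

lemma surv_eq: "c < 5 \<Longrightarrow> r < 5 \<Longrightarrow> c \<noteq> r \<Longrightarrow> tipsy_surv \<theta> n c r = gg \<theta> n (c5_dist c r)"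
proof (induction n arbitrary: c r)
  case 0
  then show ?case by simp
next
  case (Suc n)
  have c: "c = 0 \<or> c = 1 \<or> c = 2 \<or> c = 3 \<or> c = 4" and r: "r = 0 \<or> r = 1 \<or> r = 2 \<or> r = 3 \<or> r = 4" using Suc.prems by auto
  show ?case using c r Suc.prems
    apply (elim disjE)
    apply (simp_all add: c5_nbrs_def c5_dist_def avg_list_def Suc.IH Let_def)
    apply (simp_all add: algebra_simps)
    done
qed
lemma gg_bnd: "0 \<le> \<theta> \<Longrightarrow> \<theta> \<le> 1 \<Longrightarrow> 0 \<le> gg \<theta> n d \<and> gg \<theta> n d \<le> 1"
proof (induction n arbitrary: d)
  case 0
  then show ?case by simp
next
  case (Suc n)
  have a: "0 \<le> gg \<theta> n 1" "gg \<theta> n 1 \<le> 1" "0 \<le> gg \<theta> n 2" "gg \<theta> n 2 \<le> 1"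
    using Suc by auto
  have b1: "(1-\<theta>/2)*gg \<theta> n 1 \<le> 1-\<theta>/2" "\<theta>*gg \<theta> n 2 \<le> \<theta>"
    using a Suc.prems by (simp_all add: mult_left_le)
  have b2: "0 \<le> (1-\<theta>/2)*gg \<theta> n 1" "0 \<le> \<theta>*gg \<theta> n 2"
    using a Suc.prems by simp_all
  have g: "gg \<theta> (Suc n) d = (if d = 1 then (1/2)*((1-\<theta>/2)*gg \<theta> n 1 + \<theta>/2*gg \<theta> n 2)
      else (1/2)*(\<theta>*gg \<theta> n 2 + (1-\<theta>/2)*gg \<theta> n 1))" by (rule gg.simps)
  show ?case
  proof (cases "d = 1")
    case True
    then have "gg \<theta> (Suc n) d = (1/2)*((1-\<theta>/2)*gg \<theta> n 1) + (1/4)*(\<theta>*gg \<theta> n 2)" by simp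
    then show ?thesis using b1 b2 Suc.prems by linarith
  next
    case False
    then have "gg \<theta> (Suc n) d = (1/2)*((1-\<theta>/2)*gg \<theta> n 1) + (1/2)*(\<theta>*gg \<theta> n 2)" by simp
    then show ?thesis using b1 b2 Suc.prems by linarith
  qed
qed

lemma gg_summable: "0 \<le> \<theta> \<Longrightarrow> \<theta> \<le> 1 \<Longrightarrow> \<bar>t\<bar> < 1 \<Longrightarrow> summable (\<lambda>n. gg \<theta> n d * t ^ n)"
proof (rule summable_comparison_test')
  assume "0 \<le> \<theta>" "\<theta> \<le> 1" "\<bar>t\<bar> < 1"
  then show "summable (\<lambda>n. \<bar>t\<bar> ^ n)" by (simp add: summable_geometric)
  fix n
  have "\<bar>gg \<theta> n d\<bar> \<le> 1" using gg_bnd[OF \<open>0 \<le> \<theta>\<close> \<open>\<theta> \<le> 1\<close>, of n d] by auto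
  then show "norm (gg \<theta> n d * t ^ n) \<le> \<bar>t\<bar> ^ n"
    by (simp add: abs_mult power_abs mult_left_le_one_le)
qed

theorem mainTheorem9:
  fixes \<theta> t :: real and c r :: nat
  assumes "0 \<le> \<theta>" "\<theta> \<le> 1" "\<bar>t\<bar> < 1" "c < 5" "r < 5"
  defines "\<psi> \<equiv> 1/2 - \<theta> / 4"
  shows "(c5_dist c r = 1 \<longrightarrow>
           (\<lambda>n. tipsy_surv \<theta> n c r * t ^ n) sums
             ((1 - \<theta> * t / 4) / ((1 - \<theta> * t / 4) * (2 - \<psi> * t) - 1)))
       \<and> (c5_dist c r = 2 \<longrightarrow>
           (\<lambda>n. tipsy_surv \<theta> n c r * t ^ n) sums
             (1 / ((1 - \<theta> * t / 4) * (2 - \<psi> * t) - 1)))"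
proof -
  define S1 where "S1 = (\<Sum>n. gg \<theta> n 1 * t ^ n)"
  define S2 where "S2 = (\<Sum>n. gg \<theta> n 2 * t ^ n)"
  have s1: "(\<lambda>n. gg \<theta> n 1 * t ^ n) sums S1"
    unfolding S1_def using gg_summable[OF assms(1-3)] by (rule summable_sums)
  have s2: "(\<lambda>n. gg \<theta> n 2 * t ^ n) sums S2"
    unfolding S2_def using gg_summable[OF assms(1-3)] by (rule summable_sums)
  have e1: "(\<lambda>n. gg \<theta> (Suc n) 1 * t ^ Suc n) sums (t/2*(1-\<theta>/2)*S1 + t*\<theta>/4*S2)"
  proof -
    have "(\<lambda>n. t/2*(1-\<theta>/2)*(gg \<theta> n 1 * t ^ n) + t*\<theta>/4*(gg \<theta> n 2 * t ^ n)) sums (t/2*(1-\<theta>/2)*S1 + t*\<theta>/4*S2)"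
      by (intro sums_add sums_mult s1 s2)
    moreover have "(\<lambda>n. t/2*(1-\<theta>/2)*(gg \<theta> n 1 * t ^ n) + t*\<theta>/4*(gg \<theta> n 2 * t ^ n)) = (\<lambda>n. gg \<theta> (Suc n) 1 * t ^ Suc n)"
      by (auto simp: algebra_simps)
    ultimately show ?thesis by simp
  qed
  have e2: "(\<lambda>n. gg \<theta> (Suc n) 2 * t ^ Suc n) sums (t/2*\<theta>*S2 + t/2*(1-\<theta>/2)*S1)"
  proof -
    have "(\<lambda>n. t/2*\<theta>*(gg \<theta> n 2 * t ^ n) + t/2*(1-\<theta>/2)*(gg \<theta> n 1 * t ^ n)) sums (t/2*\<theta>*S2 + t/2*(1-\<theta>/2)*S1)"
      by (intro sums_add sums_mult s1 s2)
    moreover have "(\<lambda>n. t/2*\<theta>*(gg \<theta> n 2 * t ^ n) + t/2*(1-\<theta>/2)*(gg \<theta> n 1 * t ^ n)) = (\<lambda>n. gg \<theta> (Suc n) 2 * t ^ Suc n)"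
      by (auto simp: algebra_simps)
    ultimately show ?thesis by simp
  qed
  have f1: "(\<lambda>n. gg \<theta> (Suc n) 1 * t ^ Suc n) sums (S1 - 1)"
    using s1 by (subst sums_Suc_iff) simp
  have f2: "(\<lambda>n. gg \<theta> (Suc n) 2 * t ^ Suc n) sums (S2 - 1)"
    using s2 by (subst sums_Suc_iff) simp
  have E1: "S1 - 1 = t/2*(1-\<theta>/2)*S1 + t*\<theta>/4*S2" using sums_unique2[OF f1 e1] .
  have E2: "S2 - 1 = t/2*\<theta>*S2 + t/2*(1-\<theta>/2)*S1" using sums_unique2[OF f2 e2] .
  define D where "D = (1 - \<theta> * t / 4) * (2 - \<psi> * t) - 1"
  define a where "a = 1 - \<theta>/2"
  have a01: "1/2 \<le> a" "a \<le> 1" using assms(1,2) a_def by auto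
  have Dexp: "D = 1 - t*(a/2 + \<theta>/2) + \<theta>*a*t^2/8"
    by (simp add: D_def \<psi>_def a_def field_simps power2_eq_square)
  have tb: "\<bar>t*(a/2 + \<theta>/2)\<bar> \<le> 3/4"
  proof -
    have "\<bar>t*(a/2 + \<theta>/2)\<bar> = \<bar>t\<bar> * (a/2 + \<theta>/2)" using a01 assms(1) by (simp add: abs_mult)
    also have "\<dots> \<le> 1 * (a/2 + \<theta>/2)" using assms(3) a01 assms(1) by (intro mult_right_mono) auto
    also have "\<dots> \<le> 3/4" unfolding a_def using assms(2) by (simp add: field_simps)
    finally show ?thesis .
  qed
  have "0 \<le> \<theta>*a*t^2/8" using a01 assms(1) by simp
  have Dpos: "D > 0" using Dexp tb \<open>0 \<le> \<theta>*a*t^2/8\<close> by linarith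
  have A: "1 - t/2*a \<noteq> 0"
  proof -
    have "\<bar>t*a\<bar> \<le> 1 * 1" unfolding abs_mult using assms(3) a01 by (intro mult_mono) auto
    then show ?thesis by linarith
  qed
  have E1': "S1 - 1 = t/2*a*S1 + t*\<theta>/4*S2" using E1 a_def by simp
  have E2': "S2 - 1 = t/2*\<theta>*S2 + t/2*a*S1" using E2 a_def by simp
  have "D*S2 - 1 = (1-t*a/2)*(S2 - 1 - (t/2*\<theta>*S2 + t/2*a*S1)) + t*a/2*(S1 - 1 - (t/2*a*S1 + t*\<theta>/4*S2))"
    unfolding Dexp by (simp add: field_simps power2_eq_square)
  then have DS2: "D * S2 = 1" using E1' E2' by simp
  have "(1-t*a/2)*(D*S1 - (1 - \<theta>*t/4)) = D*(S1 - 1 - (t/2*a*S1 + t*\<theta>/4*S2)) + t*\<theta>/4*(D*S2 - 1)"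
    unfolding Dexp by (simp add: field_simps power2_eq_square)
  then have "(1-t*a/2)*(D*S1 - (1 - \<theta>*t/4)) = 0" using E1' DS2 by simp
  then have DS1: "D*S1 = 1 - \<theta>*t/4" using A by (simp add: mult.commute)
  have S2v: "S2 = 1 / D" using DS2 Dpos by (simp add: field_simps)
  have S1v: "S1 = (1 - \<theta> * t / 4) / D" using DS1 Dpos by (simp add: field_simps)
  have dist: "c5_dist c r = 1 \<or> c5_dist c r = 2 \<Longrightarrow> c \<noteq> r" by (auto simp: c5_dist_def)
  show ?thesis
  proof (intro conjI impI)
    assume h: "c5_dist c r = 1"
    have "(\<lambda>n. tipsy_surv \<theta> n c r * t ^ n) = (\<lambda>n. gg \<theta> n 1 * t ^ n)"
      using surv_eq[OF assms(4,5) dist] h by auto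
    then show "(\<lambda>n. tipsy_surv \<theta> n c r * t ^ n) sums
             ((1 - \<theta> * t / 4) / ((1 - \<theta> * t / 4) * (2 - \<psi> * t) - 1))"
      using s1 S1v D_def by simp
  next
    assume h: "c5_dist c r = 2"
    have "(\<lambda>n. tipsy_surv \<theta> n c r * t ^ n) = (\<lambda>n. gg \<theta> n 2 * t ^ n)"
      using surv_eq[OF assms(4,5) dist] h by auto
    then show "(\<lambda>n. tipsy_surv \<theta> n c r * t ^ n) sums
             (1 / ((1 - \<theta> * t / 4) * (2 - \<psi> * t) - 1))"
      using s2 S2v D_def by simp
  qed
qed
end
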